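(* Assume (F1)–(F3), let $\tau\ge0$ and $c\le0$. Let $w_*\in(0,1)$ be such that $f(w_* )=1$ and $f(w)>1$ for $0\le w<w_*$, and suppose $f'(w)<0$ for $w_*\le w\le w_0$. If $w$ is a solution of problem (P) with these $\tau,c$ such that $w'(x)\le0$ for all $x\in\mathbb R$, then $w'(x)<0$ for all $x\in\mathbb R$.
   Context: $f:\mathbb R\to\mathbb R$ is $C^4$ with bounded derivatives and satisfies: (F1) $f(w)>0$ for $0\le w<1$, $f(1)=0$, $f'(1)>-1$; (F2) $f(0)>1$, $f'(0)>0$, and $f(w)>1$ for $0\le w<w_*$ for some $w_*\in(0,1)$; (F3) the equation $f(w)=1-w$ has exactly one solution $w_0$ in $(0,1)$, and $f'(w_0)<-1$; hence $f(w)>1-w$ for $0\le w<w_0$ and $f(w)<1-w$ for $w_0<w<1$. Problem (P) for given $\tau\ge0$, $c\in\mathbb R$: find $w\in C^2(\mathbb R)$ with $w''(x)+cw'(x)+w(x)\big(1-w(x)-f(w(x+c\tau))\big)=0$ for all $x$, and $w(-\infty)=1$, $w(+\infty)=0$. *)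

theory Defs
  imports "HOL-Analysis.Analysis"
begin

definition C4_bdd :: "(real \<Rightarrow> real) \<Rightarrow> bool" where
  "C4_bdd f \<longleftrightarrow>
     (\<forall>k<4. \<forall>x. (deriv ^^ k) f differentiable at x) \<and>
     continuous_on UNIV ((deriv ^^ 4) f) \<and>
     (\<forall>k\<in>{1..4::nat}. bounded (range ((deriv ^^ k) f)))"

definition C2 :: "(real \<Rightarrow> real) \<Rightarrow> bool" where
  "C2 w \<longleftrightarrow> (\<forall>x. w differentiable at x) \<and> (\<forall>x. deriv w differentiable at x)
              \<and> continuous_on UNIV (deriv (deriv w))"

definition hypF :: "(real \<Rightarrow> real) \<Rightarrow> bool" where
  "hypF f \<longleftrightarrow>
    \<comment> \<open>(F1)\<close>
    (\<forall>w. 0 \<le> w \<and> w < 1 \<longrightarrow> f w > 0) \<and> f 1 = 0 \<and> deriv f 1 > -1 \<and>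
    \<comment> \<open>(F2)\<close>
    f 0 > 1 \<and> deriv f 0 > 0 \<and>
    (\<exists>ws. 0 < ws \<and> ws < 1 \<and> (\<forall>w. 0 \<le> w \<and> w < ws \<longrightarrow> f w > 1)) \<and>
    \<comment> \<open>(F3)\<close>
    (\<exists>!w0. 0 < w0 \<and> w0 < 1 \<and> f w0 = 1 - w0) \<and>
    (\<forall>w0. 0 < w0 \<and> w0 < 1 \<and> f w0 = 1 - w0 \<longrightarrow> deriv f w0 < -1)"

definition solves_P :: "(real \<Rightarrow> real) \<Rightarrow> real \<Rightarrow> real \<Rightarrow> (real \<Rightarrow> real) \<Rightarrow> bool" where
  "solves_P f tau c w \<longleftrightarrow> C2 w \<and>
     (\<forall>x. deriv (deriv w) x + c * deriv w x + w x * (1 - w x - f (w (x + c * tau))) = 0) \<and>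
     (w \<longlongrightarrow> 1) at_bot \<and> (w \<longlongrightarrow> 0) at_top"

end

theory Submission
  imports Defs
begin

lemma gronwall_fwd:
  fixes u u' u'' :: "real \<Rightarrow> real"
  assumes du: "\<And>x. (u has_real_derivative u' x) (at x)"
   and du': "\<And>x. (u' has_real_derivative u'' x) (at x)"
   and bd: "\<And>x. x \<ge> a \<Longrightarrow> \<bar>u'' x + c * u' x\<bar> \<le> L * \<bar>u x\<bar>"
   and ua: "u a = 0" and u'a: "u' a = 0" and xa: "x \<ge> a"
  shows "u x = 0"
proof -
  define K where "K = 1 + 2*\<bar>c\<bar> + \<bar>L\<bar>"
  define E where "E x = (u x)^2 + (u' x)^2" for x
  define \<phi> where "\<phi> x = exp(-K*x) * E x" for x
  have d\<phi>: "(\<phi> has_real_derivative exp(-K*y)*(2*u y*u' y + 2*u' y*u'' y) - K*exp(-K*y)*E y) (at y)" for y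
    unfolding \<phi>_def E_def
    by (rule derivative_eq_intros du du' refl | simp add: algebra_simps)+
  have ineq: "2*u y*u' y + 2*u' y*u'' y \<le> K * E y" if "y \<ge> a" for y
  proof -
    have b: "\<bar>u'' y + c * u' y\<bar> \<le> L * \<bar>u y\<bar>" using bd that by auto
    have 1: "2*u y*u' y \<le> (u y)^2 + (u' y)^2" using sum_squares_bound[of "u y" "u' y"] by (simp add: power2_eq_square)
    have "\<bar>2*u' y*(u'' y + c * u' y)\<bar> \<le> 2*\<bar>u' y\<bar>*(L * \<bar>u y\<bar>)"
      by (simp add: abs_mult b mult_left_mono)
    also have "\<dots> \<le> \<bar>L\<bar> * (2*\<bar>u y\<bar>*\<bar>u' y\<bar>)"
    proof -
      have "L * \<bar>u y\<bar> \<le> \<bar>L\<bar> * \<bar>u y\<bar>" by (simp add: mult_right_mono)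
      then have "2*\<bar>u' y\<bar>*(L * \<bar>u y\<bar>) \<le> 2*\<bar>u' y\<bar>*(\<bar>L\<bar> * \<bar>u y\<bar>)" by (simp add: mult_left_mono)
      then show ?thesis by (simp add: algebra_simps)
    qed
    also have "\<dots> \<le> \<bar>L\<bar> * E y"
    proof (rule mult_left_mono)
      show "2*\<bar>u y\<bar>*\<bar>u' y\<bar> \<le> E y" unfolding E_def
        using sum_squares_bound[of "\<bar>u y\<bar>" "\<bar>u' y\<bar>"] by (simp add: power2_eq_square)
    qed simp
    finally have 2: "2*u' y*(u'' y + c * u' y) \<le> \<bar>L\<bar> * E y" by simp
    have 3: "- 2 * c * (u' y)^2 \<le> 2*\<bar>c\<bar> * E y"
    proof -
      have "- 2 * c * (u' y)^2 \<le> 2*\<bar>c\<bar> * (u' y)^2"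
        using mult_right_mono[of "-c" "\<bar>c\<bar>" "(u' y)^2"] by simp
      also have "\<dots> \<le> 2*\<bar>c\<bar> * E y" unfolding E_def by (simp add: mult_left_mono)
      finally show ?thesis .
    qed
    have "2*u y*u' y + 2*u' y*u'' y = 2*u y*u' y + 2*u' y*(u'' y + c * u' y) - 2*c*(u' y)^2"
      by (simp add: algebra_simps power2_eq_square)
    also have "\<dots> \<le> E y + \<bar>L\<bar> * E y + 2*\<bar>c\<bar> * E y" using 1 2 3 unfolding E_def by linarith
    also have "\<dots> = K * E y" unfolding K_def by (simp add: algebra_simps)
    finally show ?thesis .
  qed
  have "\<phi> a \<ge> \<phi> x"
  proof (rule DERIV_nonpos_imp_nonincreasing[OF xa])
    fix y assume "a \<le> y" "y \<le> x"
    have "exp(-K*y)*(2*u y*u' y + 2*u' y*u'' y) \<le> exp(-K*y)*(K * E y)"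
      using ineq[OF \<open>a \<le> y\<close>] by (simp add: mult_left_mono)
    then show "\<exists>l. (\<phi> has_real_derivative l) (at y) \<and> l \<le> 0"
      using d\<phi>[of y] by (intro exI[of _ "exp(-K*y)*(2*u y*u' y + 2*u' y*u'' y) - K*exp(-K*y)*E y"]) (auto simp: algebra_simps)
  qed
  moreover have "\<phi> a = 0" unfolding \<phi>_def E_def using ua u'a by simp
  ultimately have "E x \<le> 0" unfolding \<phi>_def by (simp add: mult_le_0_iff)
  then have "(u x)^2 \<le> 0" unfolding E_def using zero_le_power2[of "u' x"] by linarith
  then show ?thesis by simp
qed

lemma gronwall_bwd:
  fixes u u' u'' :: "real \<Rightarrow> real"
  assumes du: "\<And>x. (u has_real_derivative u' x) (at x)"
   and du': "\<And>x. (u' has_real_derivative u'' x) (at x)"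
   and bd: "\<And>x. x \<le> a \<Longrightarrow> \<bar>u'' x + c * u' x\<bar> \<le> L * \<bar>u x\<bar>"
   and ua: "u a = 0" and u'a: "u' a = 0" and xa: "x \<le> a"
  shows "u x = 0"
proof -
  have "(\<lambda>t. u (-t)) (-x) = 0"
  proof (rule gronwall_fwd[where u="\<lambda>t. u (-t)" and x="-x" and u'="\<lambda>t. - u' (-t)" and u''="\<lambda>t. u'' (-t)" and c="-c" and L=L and a="-a"])
    fix t
    have dm: "(uminus has_real_derivative -1) (at t)" by (rule DERIV_minus[OF DERIV_ident])
    show "((\<lambda>t. u (-t)) has_real_derivative - u' (-t)) (at t)"
      using DERIV_chain2[OF du[of "-t"] dm] by simp
    have "((\<lambda>t. u' (-t)) has_real_derivative - u'' (-t)) (at t)"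
      using DERIV_chain2[OF du'[of "-t"] dm] by simp
    then show "((\<lambda>t. - u' (-t)) has_real_derivative u'' (-t)) (at t)"
      using DERIV_minus by fastforce
  next
    fix t :: real assume "-a \<le> t"
    then show "\<bar>u'' (-t) + -c * - u' (-t)\<bar> \<le> L * \<bar>u (-t)\<bar>" using bd[of "-t"] by simp
  qed (use ua u'a xa in auto)
  then show ?thesis by simp
qed

theorem lemma3p2:
  fixes f w :: "real \<Rightarrow> real" and tau c ws w0 :: real
  assumes "C4_bdd f" and "hypF f"
    and "tau \<ge> 0" and "c \<le> 0"
    and "0 < ws" and "ws < 1" and "f ws = 1" and "\<forall>v. 0 \<le> v \<and> v < ws \<longrightarrow> f v > 1"
    and "0 < w0" and "w0 < 1" and "f w0 = 1 - w0"
    and "\<forall>v. ws \<le> v \<and> v \<le> w0 \<longrightarrow> deriv f v < 0"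
    and "solves_P f tau c w"
    and "\<forall>x. deriv w x \<le> 0"
  shows "\<forall>x. deriv w x < 0"
proof -
  note A = assms
  define W1 where "W1 = deriv w"
  define W2 where "W2 = deriv (deriv w)"
  have dw: "(w has_real_derivative W1 x) (at x)" for x
    using A(13) unfolding solves_P_def C2_def W1_def by (simp add: DERIV_deriv_iff_real_differentiable)
  have dw1: "(W1 has_real_derivative W2 x) (at x)" for x
    using A(13) unfolding solves_P_def C2_def W1_def W2_def by (simp add: DERIV_deriv_iff_real_differentiable)
  have eq: "W2 x + c * W1 x + w x * (1 - w x - f (w (x + c * tau))) = 0" for x
    using A(13) unfolding solves_P_def W1_def W2_def by blast
  have lim1: "(w \<longlongrightarrow> 1) at_bot" and lim0: "(w \<longlongrightarrow> 0) at_top"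
    using A(13) unfolding solves_P_def by auto
  have W1le: "W1 x \<le> 0" for x using A(14) W1_def by simp
  have df: "(f has_real_derivative deriv f x) (at x)" for x
  proof -
    have "\<forall>k<(4::nat). \<forall>x. (deriv ^^ k) f differentiable at x" using A(1) unfolding C4_bdd_def by blast
    then have "(deriv ^^ 0) f differentiable at x" by (metis zero_less_numeral)
    then show ?thesis by (simp add: DERIV_deriv_iff_real_differentiable)
  qed
  have contf: "continuous_on S f" for S
    using df by (meson DERIV_isCont continuous_at_imp_continuous_on)
  obtain B where B: "\<And>x. \<bar>deriv f x\<bar> \<le> B"
  proof -
    have "\<forall>k\<in>{1..4::nat}. bounded (range ((deriv ^^ k) f))" using A(1) unfolding C4_bdd_def by blast
    then have "bounded (range ((deriv ^^ 1) f))" by (meson atLeastAtMost_iff le_numeral_extra(4) one_le_numeral)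
    then obtain B where "\<forall>y\<in>range (deriv f). norm y \<le> B" by (auto simp: bounded_iff)
    then show ?thesis using that by auto
  qed
  have lip: "\<bar>f a - f b\<bar> \<le> B * \<bar>a - b\<bar>" for a b
  proof -
    have *: "\<bar>f a - f b\<bar> \<le> B * \<bar>a - b\<bar>" if ab: "a < b" for a b
    proof -
      obtain z where "f b - f a = (b - a) * deriv f z" using MVT2[OF ab, of f "deriv f"] df by blast
      then have "f a - f b = (a - b) * deriv f z" by (simp add: algebra_simps)
      then have "\<bar>f a - f b\<bar> = \<bar>b - a\<bar> * \<bar>deriv f z\<bar>" by (simp add: abs_mult abs_minus_commute)
      also have "\<dots> \<le> \<bar>b - a\<bar> * B" by (rule mult_left_mono[OF B]) simp
      finally show ?thesis by (simp add: abs_minus_commute mult.commute)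
    qed
    show ?thesis
      using *[of a b] *[of b a] by (cases a b rule: linorder_cases) (auto simp: abs_minus_commute)
  qed
  have B0: "B \<ge> 0" using B[of 0] by simp
  have mono: "w y \<le> w x" if "x \<le> y" for x y
    using DERIV_nonpos_imp_nonincreasing[OF that, of w] dw W1le by blast
  have wle1: "w x \<le> 1" for x
  proof (rule ccontr)
    assume "\<not> w x \<le> 1"
    then have "eventually (\<lambda>y. w y < w x) at_bot" using order_tendstoD(2)[OF lim1] by simp
    then obtain N where "\<forall>y\<le>N. w y < w x" by (auto simp: eventually_at_bot_linorder)
    then have "w (min N x) < w x" by simp
    moreover have "w x \<le> w (min N x)" by (rule mono) simp
    ultimately show False by simp
  qed
  have wge0: "w x \<ge> 0" for x
  proof (rule ccontr)
    assume "\<not> w x \<ge> 0"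
    then have "eventually (\<lambda>y. w y > w x) at_top" using order_tendstoD(1)[OF lim0] by simp
    then obtain N where "\<forall>y\<ge>N. w y > w x" by (auto simp: eventually_at_top_linorder)
    then have "w (max N x) > w x" by simp
    moreover have "w (max N x) \<le> w x" by (rule mono) simp
    ultimately show False by simp
  qed
  have ctau: "c * tau \<le> 0" using A(3,4) by (simp add: mult_nonpos_nonneg)
  have fbd: "\<bar>f v\<bar> \<le> \<bar>f 0\<bar> + B" if "0 \<le> v" "v \<le> 1" for v
  proof -
    have "\<bar>f v - f 0\<bar> \<le> B * \<bar>v - 0\<bar>" by (rule lip)
    also have "\<dots> \<le> B" using that B0 by (simp add: mult_left_le)
    finally show ?thesis by linarith
  qed
  have uniq: "t = w0" if "0 < t" "t < 1" "f t = 1 - t" for t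
    using A(2) that A(9,10,11) unfolding hypF_def by blast
  have sign: "f v < 1 - v" if vv: "w0 < v" "v < 1" for v
  proof (rule ccontr)
    assume "\<not> f v < 1 - v"
    define h where "h y = f y - (1 - y)" for y
    have hv: "h v > 0"
    proof -
      have "h v \<noteq> 0" using uniq[of v] that A(9) unfolding h_def by auto
      then show ?thesis using \<open>\<not> f v < 1 - v\<close> unfolding h_def by simp
    qed
    have dh: "(h has_real_derivative deriv f 1 + 1) (at 1)"
      unfolding h_def by (rule derivative_eq_intros df refl | simp)+
    have "deriv f 1 > -1" using A(2) unfolding hypF_def by blast
    then obtain d where d: "d > 0" "\<forall>k>0. k < d \<longrightarrow> h (1 - k) < h 1"
      using DERIV_pos_inc_left[OF dh] by auto
    define k where "k = min (d/2) ((1-v)/2)"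
    have k1: "k \<le> (1-v)/2" "k \<le> d/2" unfolding k_def by (rule min.cobounded2, rule min.cobounded1)
    have k0: "k > 0" using d that unfolding k_def by auto
    have k2: "k < d" using d k0 k1 by argo
    have k3: "v < 1 - k" using k1(1) vv(2) by argo
    note k = k0 k2 k3
    have "h (1 - k) < 0" using d(2) k A(2) unfolding h_def hypF_def by auto
    moreover have "continuous_on {v..1-k} h" unfolding h_def by (intro continuous_intros contf)
    ultimately obtain t where t: "v \<le> t" "t \<le> 1 - k" "h t = 0"
      using IVT2'[of h "1-k" 0 v] hv k by auto
    then have "t = w0" using uniq[of t] vv k A(9) unfolding h_def by auto
    then show False using t that by auto
  qed
  have step: "0 < w x \<and> w x < 1 \<and> f (w (x + c*tau)) = 1 - w x \<and> c * tau \<noteq> 0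
      \<and> W1 (x + c*tau) = 0 \<and> w (x + c*tau) \<le> w0" if W1x: "W1 x = 0" for x
  proof -
    have W2x: "W2 x = 0"
      by (rule DERIV_local_max[OF dw1[of x] zero_less_one]) (use W1le W1x in auto)
    have prod: "w x * (1 - w x - f (w (x + c * tau))) = 0" using eq[of x] W1x W2x by simp
    have wx0: "w x \<noteq> 0"
    proof
      assume wx: "w x = 0"
      have allz: "w y = 0" if "y \<le> x" for y
      proof (rule gronwall_bwd[OF dw dw1, where a=x and c=c and L="2 + \<bar>f 0\<bar> + B"])
        fix y assume "y \<le> x"
        have "W2 y + c * W1 y = - (w y * (1 - w y - f (w (y + c * tau))))" using eq[of y] by linarith
        then have "\<bar>W2 y + c * W1 y\<bar> = \<bar>w y\<bar> * \<bar>1 - w y - f (w (y + c * tau))\<bar>" by (simp add: abs_mult)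
        also have "\<dots> \<le> \<bar>w y\<bar> * (2 + \<bar>f 0\<bar> + B)"
        proof (rule mult_left_mono)
          have "\<bar>f (w (y + c * tau))\<bar> \<le> \<bar>f 0\<bar> + B" by (rule fbd) (use wge0 wle1 in auto)
          then show "\<bar>1 - w y - f (w (y + c * tau))\<bar> \<le> 2 + \<bar>f 0\<bar> + B" using wge0[of y] wle1[of y] by linarith
        qed simp
        finally show "\<bar>W2 y + c * W1 y\<bar> \<le> (2 + \<bar>f 0\<bar> + B) * \<bar>w y\<bar>" by (simp add: mult.commute)
      qed (use wx W1x that in auto)
      have "eventually (\<lambda>y. w y > 1/2) at_bot" using order_tendstoD(1)[OF lim1, of "1/2"] by simp
      then obtain N where "\<forall>y\<le>N. w y > 1/2" by (auto simp: eventually_at_bot_linorder)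
      then have "w (min N x) > 1/2" by simp
      moreover have "w (min N x) = 0" by (rule allz) simp
      ultimately show False by simp
    qed
    have wx1: "w x \<noteq> 1"
    proof
      assume wx: "w x = 1"
      have allz: "1 - w y = 0" if "y \<ge> x" for y
      proof (rule gronwall_fwd[where u="\<lambda>y. 1 - w y" and x=y and u'="\<lambda>y. - W1 y" and u''="\<lambda>y. - W2 y" and a=x and c=c and L="1 + B"])
        fix y show "((\<lambda>y. 1 - w y) has_real_derivative - W1 y) (at y)"
          using dw[of y] by (auto intro!: derivative_eq_intros)
        show "((\<lambda>y. - W1 y) has_real_derivative - W2 y) (at y)"
          using dw1[of y] by (auto intro!: derivative_eq_intros)
      next
        fix y assume "x \<le> y"
        have "- W2 y + c * - W1 y = w y * (1 - w y - f (w (y + c * tau)))" using eq[of y] by linarith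
        then have "\<bar>- W2 y + c * - W1 y\<bar> = \<bar>w y\<bar> * \<bar>1 - w y - f (w (y + c * tau))\<bar>" by (simp add: abs_mult)
        also have "\<dots> \<le> 1 * ((1 + B) * \<bar>1 - w y\<bar>)"
        proof (rule mult_mono)
          show "\<bar>w y\<bar> \<le> 1" using wge0[of y] wle1[of y] by simp
          have "\<bar>f (w (y + c * tau)) - f 1\<bar> \<le> B * \<bar>w (y + c * tau) - 1\<bar>" by (rule lip)
          moreover have "f 1 = 0" using A(2) unfolding hypF_def by blast
          moreover have "w y \<le> w (y + c * tau)" by (rule mono) (use ctau in simp)
          moreover have "B * \<bar>w (y + c * tau) - 1\<bar> \<le> B * \<bar>1 - w y\<bar>"
            by (rule mult_left_mono) (use B0 wle1[of "y + c*tau"] wle1[of y] \<open>w y \<le> w (y + c * tau)\<close> in auto)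
          ultimately show "\<bar>1 - w y - f (w (y + c * tau))\<bar> \<le> (1 + B) * \<bar>1 - w y\<bar>"
            using wle1[of y] by (simp add: algebra_simps)
        qed (use B0 in auto)
        finally show "\<bar>- W2 y + c * - W1 y\<bar> \<le> (1 + B) * \<bar>1 - w y\<bar>" by simp
      qed (use wx W1x that in auto)
      have "eventually (\<lambda>y. w y < 1/2) at_top" using order_tendstoD(2)[OF lim0, of "1/2"] by simp
      then obtain N where "\<forall>y\<ge>N. w y < 1/2" by (auto simp: eventually_at_top_linorder)
      then have "w (max N x) < 1/2" by simp
      moreover have "1 - w (max N x) = 0" by (rule allz) simp
      ultimately show False by simp
    qed
    have wx: "0 < w x" "w x < 1" using wx0 wx1 wge0[of x] wle1[of x] by auto
    have fz: "f (w (x + c*tau)) = 1 - w x" using prod wx0 by simp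
    have ct0: "c * tau \<noteq> 0"
    proof
      assume ct: "c * tau = 0"
      then have "x + c * tau = x" by simp
      then have "f (w x) = 1 - w x" using fz by metis
      then have wxw0: "w x = w0" using uniq wx by blast
      define K where "K = 1 + \<bar>f 0\<bar> + B + B"
      have hl: "\<bar>a * (1 - a - f a)\<bar> \<le> K * \<bar>a - w0\<bar>" if "0 \<le> a" "a \<le> 1" for a
      proof -
        define b where "b = w0"
        have hb: "b * (1 - b - f b) = 0" using A(11) b_def by simp
        have "a * (1 - a - f a) = a * (1 - a - f a) - b * (1 - b - f b)" using hb by simp
        also have "\<dots> = (a - b) * (1 - a - b) - (a - b) * f a - b * (f a - f b)"
          by (simp add: algebra_simps)
        finally have e: "a * (1 - a - f a) = (a - b) * (1 - a - b) - (a - b) * f a - b * (f a - f b)" .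
        have t1: "\<bar>(a - b) * (1 - a - b)\<bar> \<le> \<bar>a - b\<bar> * 1"
          unfolding abs_mult by (rule mult_left_mono) (use that A(9,10) b_def in auto)
        have t2: "\<bar>(a - b) * f a\<bar> \<le> \<bar>a - b\<bar> * (\<bar>f 0\<bar> + B)"
          unfolding abs_mult by (rule mult_left_mono) (use fbd that in auto)
        have t3: "\<bar>b * (f a - f b)\<bar> \<le> 1 * (B * \<bar>a - b\<bar>)"
          unfolding abs_mult by (rule mult_mono) (use lip A(9,10) b_def B0 in auto)
        have "\<bar>a * (1 - a - f a)\<bar> \<le> \<bar>a - b\<bar> * 1 + \<bar>a - b\<bar> * (\<bar>f 0\<bar> + B) + 1 * (B * \<bar>a - b\<bar>)"
          unfolding e using t1 t2 t3 by linarith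
        also have "\<dots> = K * \<bar>a - w0\<bar>" unfolding K_def b_def by (simp add: algebra_simps)
        finally show ?thesis .
      qed
      have allz: "w y - w0 = 0" if "y \<ge> x" for y
      proof (rule gronwall_fwd[where u="\<lambda>y. w y - w0" and x=y and u'="W1" and u''="W2" and a=x and c=c and L="K"])
        fix y show "((\<lambda>y. w y - w0) has_real_derivative W1 y) (at y)"
          using dw[of y] by (auto intro!: derivative_eq_intros)
        show "(W1 has_real_derivative W2 y) (at y)" by (rule dw1)
      next
        fix y assume "x \<le> y"
        have "W2 y + c * W1 y = - (w y * (1 - w y - f (w y)))" using eq[of y] ct by simp
        then show "\<bar>W2 y + c * W1 y\<bar> \<le> K * \<bar>w y - w0\<bar>" using hl[OF wge0 wle1, of y] by simp
      qed (use wxw0 W1x that in auto)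
      have "eventually (\<lambda>y. w y < w0/2) at_top" using order_tendstoD(2)[OF lim0, of "w0/2"] A(9) by simp
      then obtain N where "\<forall>y\<ge>N. w y < w0/2" by (auto simp: eventually_at_top_linorder)
      then have "w (max N x) < w0/2" by simp
      moreover have "w (max N x) - w0 = 0" by (rule allz) simp
      ultimately show False using A(9) by simp
    qed
    define z where "z = w (x + c*tau)"
    have zge: "w x \<le> z" unfolding z_def by (rule mono) (use ctau in simp)
    have zws: "ws \<le> z"
    proof (rule ccontr)
      assume "\<not> ws \<le> z"
      then have "f z > 1" using A(8) wge0 z_def by auto
      then show False using fz wx z_def by simp
    qed
    have zw0: "z \<le> w0"
    proof (rule ccontr)
      assume "\<not> z \<le> w0"
      show False
      proof (cases "z = 1")
        case True
        then show ?thesis using fz z_def wx A(2) unfolding hypF_def by auto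
      next
        case False
        then have "z < 1" using wle1 z_def by (simp add: less_le)
        then have "f z < 1 - z" using sign \<open>\<not> z \<le> w0\<close> by simp
        then show False using fz zge z_def by simp
      qed
    qed
    have dfz: "deriv f z < 0" using A(12) zws zw0 by blast
    have W1c: "W1 (x + c*tau) = 0"
    proof (rule ccontr)
      assume "W1 (x + c*tau) \<noteq> 0"
      then have neg: "W1 (x + c*tau) < 0" using W1le[of "x + c*tau"] by simp
      have W2eq: "W2 = (\<lambda>y. -c * W1 y - w y * (1 - w y - f (w (y + c * tau))))"
        using eq by (auto simp: fun_eq_iff algebra_simps)
      have dsh: "((\<lambda>y. w (y + c * tau)) has_real_derivative W1 (x + c*tau)) (at x)"
      proof -
        have "((\<lambda>y. y + c*tau) has_real_derivative 1) (at x)" by (auto intro!: derivative_eq_intros)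
        from DERIV_chain2[where g="\<lambda>y. y + c*tau" and x=x, OF dw[of "x + c*tau"] this] show ?thesis by simp
      qed
      have dcomp: "((\<lambda>y. f (w (y + c * tau))) has_real_derivative deriv f z * W1 (x + c*tau)) (at x)"
        using DERIV_chain2[where g="\<lambda>y. w (y+c*tau)" and x=x, OF df[of "w (x + c*tau)"] dsh] unfolding z_def by simp
      have dW2: "(W2 has_real_derivative w x * deriv f z * W1 (x + c*tau)) (at x)"
        unfolding W2eq
        by (rule derivative_eq_intros dw dw1 dcomp refl | simp add: W1x W2x algebra_simps)+
      have pos: "w x * deriv f z * W1 (x + c*tau) > 0"
        using wx dfz neg by (simp add: mult_pos_neg mult_neg_neg)
      obtain d where d: "d > 0" "\<forall>h>0. h < d \<longrightarrow> W2 x < W2 (x + h)"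
        using DERIV_pos_inc_right[OF dW2 pos] by auto
      obtain \<xi> where xi: "x < \<xi>" "\<xi> < x + d/2" "W1 (x + d/2) - W1 x = (x + d/2 - x) * W2 \<xi>"
        using MVT2[of x "x + d/2" W1 W2] dw1 d(1) by auto
      have W2p: "W2 \<xi> > 0" using d(2)[rule_format, of "\<xi> - x"] xi W2x by auto
      have "W1 (x + d/2) > 0" using xi W1x mult_pos_pos[OF d(1) W2p] by simp
      then show False using W1le by (simp add: not_less[symmetric])
    qed
    show ?thesis using wx fz ct0 W1c zw0 z_def by simp
  qed
  show ?thesis
  proof (rule ccontr)
    assume "\<not> (\<forall>x. deriv w x < 0)"
    then obtain x0 where "W1 x0 = 0" using W1le W1_def by (metis not_less order.antisym)
    have ct: "c * tau < 0" using conjunct1[OF conjunct2[OF conjunct2[OF conjunct2[OF step[OF \<open>W1 x0 = 0\<close>]]]]] ctau by linarith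
    have iter: "W1 (x0 + real n * (c*tau)) = 0" for n
    proof (induction n)
      case 0 then show ?case using \<open>W1 x0 = 0\<close> by simp
    next
      case (Suc n)
      have "W1 (x0 + real n * (c*tau) + c * tau) = 0" using step[OF Suc] by simp
      then show ?case by (simp add: algebra_simps)
    qed
    have le: "w (x0 + real (Suc n) * (c*tau)) \<le> w0" for n
    proof -
      have "w (x0 + real n * (c*tau) + c * tau) \<le> w0" using step[OF iter[of n]] by simp
      then show ?thesis by (simp add: algebra_simps)
    qed
    have "eventually (\<lambda>y. w y > w0) at_bot" using order_tendstoD(1)[OF lim1, of w0] A(10) by simp
    then obtain N where N: "\<forall>y\<le>N. w y > w0" by (auto simp: eventually_at_bot_linorder)
    obtain n where n: "x0 - N < real n * (- (c*tau))" using reals_Archimedean3[of "- (c*tau)"] ct by auto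
    have "x0 + real (Suc n) * (c*tau) \<le> N" using n ct by (simp add: algebra_simps)
    then have "w (x0 + real (Suc n) * (c*tau)) > w0" using N by blast
    then show False using le[of n] by simp
  qed
qed

end
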